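(* Let $(H,B_1,B_2)$ be a Rota-Baxter system of Hopf algebras with cocycle $\sigma$ and descendent Hopf algebra $H_{B_1,B_2}$ (with underlying space $H_1=\operatorname{Im}(\sigma)$), and let $A$ be a unital commutative algebra. Define $\Psi:\mathrm{Char}(H,A)\to\mathrm{Char}(H_{B_1,B_2},A)$ by $\Psi(f)(a)=f(a)$ for $a\in H_1$. Then $\Psi$ is a well-defined group homomorphism.
   Context: $\mathbb{F}$ is a field of characteristic $0$; Sweedler notation $\Delta(a)=a_1\otimes a_2$. A Rota-Baxter system of Hopf algebras is a triple $(H,B_1,B_2)$ with $(H,\cdot,1,\Delta,\epsilon,S)$ a cocommutative Hopf algebra, $B_1,B_2$ coalgebra homomorphisms with $B_1(1)=B_2(1)=1$, and for all $a,b\in H$: $B_1(a)B_1(b)=B_1(B_1(a_1)bS(B_2(a_2)))$, $B_2(a)B_2(b)=B_2(B_1(a_1)bS(B_2(a_2)))$. Descendent operation $a\circ b=B_1(a_1)bS(B_2(a_2))$, cocycle $\sigma(a)=B_1(a_1)S(B_2(a_2))$; $H_{B_1,B_2}$ is the Hopf algebra $H_1$ with product $\circ$, unit $1$, restricted $\Delta,\epsilon$, antipode $T(a)=S(B_1(a_1))B_2(a_2)$. Convolution: $(f\ast g)(a)=f(a_1)g(a_2)$. $\mathrm{Char}(H,A)$ is the group under $\ast$ of algebra homomorphisms $H\to A$; $\mathrm{Char}(H_{B_1,B_2},A)$ is the group under convolution (w.r.t. the coproduct of $H_1$) of algebra homomorphisms $(H_1,\circ,1)\to A$. *)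

theory Defs
  imports Complex_Main "HOL-Library.FuncSet"
begin

text \<open>An element of H (x) H is represented by a list of pairs (sum of x (x) y).
  Two such lists denote the same tensor iff all products of linear functionals
  agree on them (over a field this is exactly equality in H (x) H).\<close>

definition tensor_eq ::
  "('k::field \<Rightarrow> 'h::ab_group_add \<Rightarrow> 'h) \<Rightarrow> ('h \<times> 'h) list \<Rightarrow> ('h \<times> 'h) list \<Rightarrow> bool" where
  "tensor_eq sc xs ys \<longleftrightarrow>
     (\<forall>(\<phi>::'h \<Rightarrow> 'k) \<psi>. Vector_Spaces.linear sc (*) \<phi> \<and> Vector_Spaces.linear sc (*) \<psi> \<longrightarrow>
        (\<Sum>(x,y)\<leftarrow>xs. \<phi> x * \<psi> y) = (\<Sum>(x,y)\<leftarrow>ys. \<phi> x * \<psi> y))"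

definition tensor3_eq ::
  "('k::field \<Rightarrow> 'h::ab_group_add \<Rightarrow> 'h) \<Rightarrow> ('h \<times> 'h \<times> 'h) list \<Rightarrow> ('h \<times> 'h \<times> 'h) list \<Rightarrow> bool" where
  "tensor3_eq sc xs ys \<longleftrightarrow>
     (\<forall>(\<phi>::'h \<Rightarrow> 'k) \<psi> \<chi>. Vector_Spaces.linear sc (*) \<phi> \<and> Vector_Spaces.linear sc (*) \<psi>
        \<and> Vector_Spaces.linear sc (*) \<chi> \<longrightarrow>
        (\<Sum>(x,y,z)\<leftarrow>xs. \<phi> x * \<psi> y * \<chi> z) = (\<Sum>(x,y,z)\<leftarrow>ys. \<phi> x * \<psi> y * \<chi> z))"

text \<open>The ring structure of H is the type class ring_1; sc is the scalar
  multiplication by the field; Cop a is (a representative of) the coproduct of a,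
  eps the counit, S the antipode.\<close>

definition cocomm_hopf_algebra ::
  "('k::field \<Rightarrow> 'h::ring_1 \<Rightarrow> 'h) \<Rightarrow> ('h \<Rightarrow> ('h \<times> 'h) list) \<Rightarrow> ('h \<Rightarrow> 'k) \<Rightarrow> ('h \<Rightarrow> 'h) \<Rightarrow> bool" where
  "cocomm_hopf_algebra sc Cop eps S \<longleftrightarrow>
     vector_space sc \<and>
     (\<forall>c x y. sc c (x * y) = sc c x * y \<and> sc c (x * y) = x * sc c y) \<and>
     (\<forall>a b. tensor_eq sc (Cop (a + b)) (Cop a @ Cop b)) \<and>
     (\<forall>c a. tensor_eq sc (Cop (sc c a)) (map (\<lambda>(x,y). (sc c x, y)) (Cop a))) \<and>
     (\<forall>a. tensor3_eq sc
            (concat (map (\<lambda>(x,y). map (\<lambda>(u,v). (u,v,y)) (Cop x)) (Cop a)))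
            (concat (map (\<lambda>(x,y). map (\<lambda>(u,v). (x,u,v)) (Cop y)) (Cop a)))) \<and>
     Vector_Spaces.linear sc (*) eps \<and>
     (\<forall>a. (\<Sum>(x,y)\<leftarrow>Cop a. sc (eps x) y) = a \<and> (\<Sum>(x,y)\<leftarrow>Cop a. sc (eps y) x) = a) \<and>
     (\<forall>a b. tensor_eq sc (Cop (a * b))
              (concat (map (\<lambda>(x,y). map (\<lambda>(u,v). (x * u, y * v)) (Cop b)) (Cop a)))) \<and>
     tensor_eq sc (Cop 1) [(1,1)] \<and>
     (\<forall>a b. eps (a * b) = eps a * eps b) \<and> eps 1 = 1 \<and>
     Vector_Spaces.linear sc sc S \<and>
     (\<forall>a. (\<Sum>(x,y)\<leftarrow>Cop a. S x * y) = sc (eps a) 1 \<and> (\<Sum>(x,y)\<leftarrow>Cop a. x * S y) = sc (eps a) 1) \<and>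
     (\<forall>a. tensor_eq sc (Cop a) (map (\<lambda>(x,y). (y,x)) (Cop a)))"

definition coalg_hom ::
  "('k::field \<Rightarrow> 'h::ring_1 \<Rightarrow> 'h) \<Rightarrow> ('h \<Rightarrow> ('h \<times> 'h) list) \<Rightarrow> ('h \<Rightarrow> 'k) \<Rightarrow> ('h \<Rightarrow> 'h) \<Rightarrow> bool" where
  "coalg_hom sc Cop eps B \<longleftrightarrow>
     Vector_Spaces.linear sc sc B \<and>
     (\<forall>a. tensor_eq sc (Cop (B a)) (map (\<lambda>(x,y). (B x, B y)) (Cop a))) \<and>
     (\<forall>a. eps (B a) = eps a)"

definition desc_op ::
  "('h::ring_1 \<Rightarrow> ('h \<times> 'h) list) \<Rightarrow> ('h \<Rightarrow> 'h) \<Rightarrow> ('h \<Rightarrow> 'h) \<Rightarrow> ('h \<Rightarrow> 'h) \<Rightarrow> 'h \<Rightarrow> 'h \<Rightarrow> 'h" where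
  "desc_op Cop S B1 B2 a b = (\<Sum>(x,y)\<leftarrow>Cop a. B1 x * b * S (B2 y))"

definition cocycle ::
  "('h::ring_1 \<Rightarrow> ('h \<times> 'h) list) \<Rightarrow> ('h \<Rightarrow> 'h) \<Rightarrow> ('h \<Rightarrow> 'h) \<Rightarrow> ('h \<Rightarrow> 'h) \<Rightarrow> 'h \<Rightarrow> 'h" where
  "cocycle Cop S B1 B2 a = (\<Sum>(x,y)\<leftarrow>Cop a. B1 x * S (B2 y))"

definition rota_baxter_system ::
  "('k::field \<Rightarrow> 'h::ring_1 \<Rightarrow> 'h) \<Rightarrow> ('h \<Rightarrow> ('h \<times> 'h) list) \<Rightarrow> ('h \<Rightarrow> 'k) \<Rightarrow> ('h \<Rightarrow> 'h)
     \<Rightarrow> ('h \<Rightarrow> 'h) \<Rightarrow> ('h \<Rightarrow> 'h) \<Rightarrow> bool" where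
  "rota_baxter_system sc Cop eps S B1 B2 \<longleftrightarrow>
     cocomm_hopf_algebra sc Cop eps S \<and>
     coalg_hom sc Cop eps B1 \<and> coalg_hom sc Cop eps B2 \<and> B1 1 = 1 \<and> B2 1 = 1 \<and>
     (\<forall>a b. B1 a * B1 b = B1 (desc_op Cop S B1 B2 a b)) \<and>
     (\<forall>a b. B2 a * B2 b = B2 (desc_op Cop S B1 B2 a b))"

definition desc_space ::
  "('h::ring_1 \<Rightarrow> ('h \<times> 'h) list) \<Rightarrow> ('h \<Rightarrow> 'h) \<Rightarrow> ('h \<Rightarrow> 'h) \<Rightarrow> ('h \<Rightarrow> 'h) \<Rightarrow> 'h set" where
  "desc_space Cop S B1 B2 = range (cocycle Cop S B1 B2)"

text \<open>Structural facts presupposed by "the descendent Hopf algebra H_{B1,B2}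
  with underlying space H1": H1 contains 1 and is closed under the descendent
  product, and the coproduct restricts to H1 (x) H1.\<close>

definition desc_hopf_structure ::
  "('k::field \<Rightarrow> 'h::ring_1 \<Rightarrow> 'h) \<Rightarrow> ('h \<Rightarrow> ('h \<times> 'h) list) \<Rightarrow> ('h \<Rightarrow> 'h) \<Rightarrow> ('h \<Rightarrow> 'h) \<Rightarrow> ('h \<Rightarrow> 'h) \<Rightarrow> bool" where
  "desc_hopf_structure sc Cop S B1 B2 \<longleftrightarrow>
     (let H1 = desc_space Cop S B1 B2 in
       1 \<in> H1 \<and>
       (\<forall>a\<in>H1. \<forall>b\<in>H1. desc_op Cop S B1 B2 a b \<in> H1) \<and>
       (\<forall>a\<in>H1. \<exists>xs. tensor_eq sc (Cop a) xs \<and> set xs \<subseteq> H1 \<times> H1))"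

definition desc_cop ::
  "('k::field \<Rightarrow> 'h::ring_1 \<Rightarrow> 'h) \<Rightarrow> ('h \<Rightarrow> ('h \<times> 'h) list) \<Rightarrow> 'h set \<Rightarrow> 'h \<Rightarrow> ('h \<times> 'h) list" where
  "desc_cop sc Cop H1 a = (SOME xs. tensor_eq sc (Cop a) xs \<and> set xs \<subseteq> H1 \<times> H1)"

definition unital_comm_algebra :: "('k::field \<Rightarrow> 'a::comm_ring_1 \<Rightarrow> 'a) \<Rightarrow> bool" where
  "unital_comm_algebra scA \<longleftrightarrow> vector_space scA \<and> (\<forall>c x y. scA c (x * y) = scA c x * y)"

definition Char ::
  "('k::field \<Rightarrow> 'h::ring_1 \<Rightarrow> 'h) \<Rightarrow> ('k \<Rightarrow> 'a::comm_ring_1 \<Rightarrow> 'a) \<Rightarrow> ('h \<Rightarrow> 'a) set" where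
  "Char sc scA = {f. Vector_Spaces.linear sc scA f \<and> f 1 = 1 \<and> (\<forall>a b. f (a * b) = f a * f b)}"

definition conv :: "('h \<Rightarrow> ('h \<times> 'h) list) \<Rightarrow> ('h \<Rightarrow> 'a::comm_ring_1) \<Rightarrow> ('h \<Rightarrow> 'a) \<Rightarrow> 'h \<Rightarrow> 'a" where
  "conv Cop f g = (\<lambda>a. \<Sum>(x,y)\<leftarrow>Cop a. f x * g y)"

text \<open>Char(H_{B1,B2},A): algebra homomorphisms (H1, desc_op, 1) -> A, as functions
  on the carrier H1 (extensional, undefined outside H1).\<close>

definition Char_desc ::
  "('k::field \<Rightarrow> 'h::ring_1 \<Rightarrow> 'h) \<Rightarrow> ('h \<Rightarrow> ('h \<times> 'h) list) \<Rightarrow> ('h \<Rightarrow> 'h) \<Rightarrow> ('h \<Rightarrow> 'h) \<Rightarrow> ('h \<Rightarrow> 'h)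
     \<Rightarrow> ('k \<Rightarrow> 'a::comm_ring_1 \<Rightarrow> 'a) \<Rightarrow> ('h \<Rightarrow> 'a) set" where
  "Char_desc sc Cop S B1 B2 scA =
     (let H1 = desc_space Cop S B1 B2 in
      {f. f \<in> extensional H1 \<and>
          (\<forall>a\<in>H1. \<forall>b\<in>H1. f (a + b) = f a + f b) \<and>
          (\<forall>c. \<forall>a\<in>H1. f (sc c a) = scA c (f a)) \<and>
          f 1 = 1 \<and>
          (\<forall>a\<in>H1. \<forall>b\<in>H1. f (desc_op Cop S B1 B2 a b) = f a * f b)})"

definition conv_desc ::
  "('k::field \<Rightarrow> 'h::ring_1 \<Rightarrow> 'h) \<Rightarrow> ('h \<Rightarrow> ('h \<times> 'h) list) \<Rightarrow> 'h set
     \<Rightarrow> ('h \<Rightarrow> 'a::comm_ring_1) \<Rightarrow> ('h \<Rightarrow> 'a) \<Rightarrow> 'h \<Rightarrow> 'a" where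
  "conv_desc sc Cop H1 f g = (\<lambda>a\<in>H1. \<Sum>(x,y)\<leftarrow>desc_cop sc Cop H1 a. f x * g y)"

definition Psi :: "'h set \<Rightarrow> ('h \<Rightarrow> 'a) \<Rightarrow> 'h \<Rightarrow> 'a" where
  "Psi H1 f = restrict f H1"

end

theory Submission
  imports Defs
begin


definition lin :: "('k::field \<Rightarrow> 'h::ab_group_add \<Rightarrow> 'h) \<Rightarrow> ('k \<Rightarrow> 'v::ab_group_add \<Rightarrow> 'v) \<Rightarrow> ('h \<Rightarrow> 'v) \<Rightarrow> bool" where
  "lin sc scV h \<longleftrightarrow> (\<forall>x y. h (x + y) = h x + h y) \<and> (\<forall>c x. h (sc c x) = scV c (h x))"

lemma lin_add: "lin sc scV h \<Longrightarrow> h (x + y) = h x + h y"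
  by (simp add: lin_def)
lemma lin_scale: "lin sc scV h \<Longrightarrow> h (sc c x) = scV c (h x)"
  by (simp add: lin_def)
lemma lin_zero: "lin sc scV h \<Longrightarrow> h 0 = 0"
  using lin_add[of sc scV h 0 0] by simp
lemma lin_sum_list: "lin sc scV h \<Longrightarrow> h (sum_list (map g xs)) = sum_list (map (\<lambda>z. h (g z)) xs)"
  by (induction xs) (simp_all add: lin_zero lin_add)
lemma lin_sum: "lin sc scV h \<Longrightarrow> h (sum g T) = (\<Sum>t\<in>T. h (g t))"
  by (induction T rule: infinite_finite_induct) (simp_all add: lin_zero lin_add)
lemma linear_lin: "Vector_Spaces.linear s1 s2 f \<Longrightarrow> lin s1 s2 f"
  unfolding lin_def Vector_Spaces.linear_def module_hom_def module_hom_axioms_def by blast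

lemma sum_list_scale_left:
  assumes "vector_space scV"
  shows "scV (sum_list (map g zs)) v = sum_list (map (\<lambda>z. scV (g z) v) zs)"
proof -
  interpret V: vector_space scV by fact
  show ?thesis by (induction zs) (simp_all add: V.scale_left_distrib)
qed

lemma sum_list_sum_swap:
  "sum_list (map (\<lambda>z. \<Sum>t\<in>T. g z t) zs) = (\<Sum>t\<in>T. sum_list (map (\<lambda>z. g z t) zs))"
  by (induction zs) (simp_all add: sum.distrib)

lemma transfer2:
  fixes sc :: "'k::field \<Rightarrow> 'h::ab_group_add \<Rightarrow> 'h" and scV :: "'k \<Rightarrow> 'v::ab_group_add \<Rightarrow> 'v"
  assumes VH: "vector_space sc" and VV: "vector_space scV" and te: "tensor_eq sc xs ys"
    and F1: "\<And>y. lin sc scV (\<lambda>x. F x y)" and F2: "\<And>x. lin sc scV (F x)"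
  shows "(\<Sum>(x,y)\<leftarrow>xs. F x y) = (\<Sum>(x,y)\<leftarrow>ys. F x y)"
proof -
  interpret H: vector_space sc by (rule VH)
  interpret V: vector_space scV by (rule VV)
  define B where "B = H.extend_basis {}"
  have indB: "H.independent B" and spB: "H.span B = UNIV"
    by (simp_all add: B_def H.independent_extend_basis H.independent_empty)
  define r where "r v b = H.representation B v b" for v b
  have linr: "Vector_Spaces.linear sc (*) (\<lambda>v. r v b)" for b
    unfolding r_def by (rule H.linear_representation[OF indB spB])
  define T where "T = (\<Union>z\<in>set xs \<union> set ys. {b. r (fst z) b \<noteq> 0} \<union> {b. r (snd z) b \<noteq> 0})"
  have finT: "finite T"
    unfolding T_def r_def by (auto intro!: H.finite_representation)
  have exp: "v = (\<Sum>b\<in>T. sc (r v b) b)" if "{b. r v b \<noteq> 0} \<subseteq> T" for v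
  proof -
    have "(\<Sum>b\<in>T. sc (r v b) b) = (\<Sum>b | r v b \<noteq> 0. sc (r v b) b)"
      by (rule sum.mono_neutral_right[OF finT that]) auto
    also have "\<dots> = v" unfolding r_def
      by (rule H.sum_nonzero_representation_eq[OF indB]) (simp add: spB)
    finally show ?thesis by simp
  qed
  have Fexp: "F x y = (\<Sum>b\<in>T. \<Sum>b'\<in>T. scV (r x b * r y b') (F b b'))"
    if x: "{b. r x b \<noteq> 0} \<subseteq> T" and y: "{b. r y b \<noteq> 0} \<subseteq> T" for x y
  proof -
    have "F x y = F (\<Sum>b\<in>T. sc (r x b) b) y" using exp[OF x] by simp
    also have "\<dots> = (\<Sum>b\<in>T. scV (r x b) (F b y))"
      by (simp add: lin_sum[OF F1] lin_scale[OF F1])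
    also have "\<dots> = (\<Sum>b\<in>T. scV (r x b) (F b (\<Sum>b'\<in>T. sc (r y b') b')))"
      using exp[OF y] by simp
    also have "\<dots> = (\<Sum>b\<in>T. \<Sum>b'\<in>T. scV (r x b * r y b') (F b b'))"
      by (simp add: lin_sum[OF F2] lin_scale[OF F2] V.scale_sum_right)
    finally show ?thesis .
  qed
  have gen: "(\<Sum>(x,y)\<leftarrow>zs. F x y) = (\<Sum>b\<in>T. \<Sum>b'\<in>T. scV (\<Sum>(x,y)\<leftarrow>zs. r x b * r y b') (F b b'))"
    if "set zs \<subseteq> set xs \<union> set ys" for zs
    using that
  proof (induction zs)
    case Nil
    then show ?case by simp
  next
    case (Cons z zs)
    obtain x y where z: "z = (x,y)" by force
    have sx: "{b. r x b \<noteq> 0} \<subseteq> T" and sy: "{b. r y b \<noteq> 0} \<subseteq> T"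
      using Cons.prems z unfolding T_def by force+
    show ?case using Cons
      by (simp add: z Fexp[OF sx sy] V.scale_left_distrib sum.distrib)
  qed
  have coef: "(\<Sum>(x,y)\<leftarrow>xs. r x b * r y b') = (\<Sum>(x,y)\<leftarrow>ys. r x b * r y b')" for b b'
    using te linr[of b] linr[of b'] unfolding tensor_eq_def by blast
  show ?thesis
    by (simp add: gen coef)
qed



lemma transfer3:
  fixes sc :: "'k::field \<Rightarrow> 'h::ab_group_add \<Rightarrow> 'h" and scV :: "'k \<Rightarrow> 'v::ab_group_add \<Rightarrow> 'v"
  assumes VH: "vector_space sc" and VV: "vector_space scV" and te: "tensor3_eq sc xs ys"
    and F1: "\<And>y z. lin sc scV (\<lambda>x. F x y z)" and F2: "\<And>x z. lin sc scV (\<lambda>y. F x y z)"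
    and F3: "\<And>x y. lin sc scV (F x y)"
  shows "(\<Sum>(x,y,z)\<leftarrow>xs. F x y z) = (\<Sum>(x,y,z)\<leftarrow>ys. F x y z)"
proof -
  interpret H: vector_space sc by (rule VH)
  interpret V: vector_space scV by (rule VV)
  define B where "B = H.extend_basis {}"
  have indB: "H.independent B" and spB: "H.span B = UNIV"
    by (simp_all add: B_def H.independent_extend_basis H.independent_empty)
  define r where "r v b = H.representation B v b" for v b
  have linr: "Vector_Spaces.linear sc (*) (\<lambda>v. r v b)" for b
    unfolding r_def by (rule H.linear_representation[OF indB spB])
  define T where "T = (\<Union>z\<in>set xs \<union> set ys. {b. r (fst z) b \<noteq> 0} \<union> {b. r (fst (snd z)) b \<noteq> 0}
     \<union> {b. r (snd (snd z)) b \<noteq> 0})"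
  have finT: "finite T"
    unfolding T_def r_def by (auto intro!: H.finite_representation)
  have exp: "v = (\<Sum>b\<in>T. sc (r v b) b)" if "{b. r v b \<noteq> 0} \<subseteq> T" for v
  proof -
    have "(\<Sum>b\<in>T. sc (r v b) b) = (\<Sum>b | r v b \<noteq> 0. sc (r v b) b)"
      by (rule sum.mono_neutral_right[OF finT that]) auto
    also have "\<dots> = v" unfolding r_def
      by (rule H.sum_nonzero_representation_eq[OF indB]) (simp add: spB)
    finally show ?thesis by simp
  qed
  have Fexp: "F x y z = (\<Sum>b\<in>T. \<Sum>b'\<in>T. \<Sum>b''\<in>T. scV (r x b * r y b' * r z b'') (F b b' b''))"
    if x: "{b. r x b \<noteq> 0} \<subseteq> T" and y: "{b. r y b \<noteq> 0} \<subseteq> T" and z: "{b. r z b \<noteq> 0} \<subseteq> T" for x y z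
  proof -
    have "F x y z = F (\<Sum>b\<in>T. sc (r x b) b) y z" using exp[OF x] by simp
    also have "\<dots> = (\<Sum>b\<in>T. scV (r x b) (F b y z))"
      by (simp add: lin_sum[OF F1] lin_scale[OF F1])
    also have "\<dots> = (\<Sum>b\<in>T. scV (r x b) (F b (\<Sum>b'\<in>T. sc (r y b') b') z))"
      using exp[OF y] by simp
    also have "\<dots> = (\<Sum>b\<in>T. \<Sum>b'\<in>T. scV (r x b * r y b') (F b b' z))"
      by (simp add: lin_sum[OF F2] lin_scale[OF F2] V.scale_sum_right)
    also have "\<dots> = (\<Sum>b\<in>T. \<Sum>b'\<in>T. scV (r x b * r y b') (F b b' (\<Sum>b''\<in>T. sc (r z b'') b'')))"
      using exp[OF z] by simp
    also have "\<dots> = (\<Sum>b\<in>T. \<Sum>b'\<in>T. \<Sum>b''\<in>T. scV (r x b * r y b' * r z b'') (F b b' b''))"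
      by (simp add: lin_sum[OF F3] lin_scale[OF F3] V.scale_sum_right)
    finally show ?thesis .
  qed
  have gen: "(\<Sum>(x,y,z)\<leftarrow>zs. F x y z) = (\<Sum>b\<in>T. \<Sum>b'\<in>T. \<Sum>b''\<in>T. scV (\<Sum>(x,y,z)\<leftarrow>zs. r x b * r y b' * r z b'') (F b b' b''))"
    if "set zs \<subseteq> set xs \<union> set ys" for zs
    using that
  proof (induction zs)
    case Nil
    then show ?case by simp
  next
    case (Cons w zs)
    obtain x y z where w: "w = (x,y,z)" by (cases w) force
    have sx: "{b. r x b \<noteq> 0} \<subseteq> T" and sy: "{b. r y b \<noteq> 0} \<subseteq> T" and sz: "{b. r z b \<noteq> 0} \<subseteq> T"
      using Cons.prems w unfolding T_def by force+
    show ?case using Cons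
      by (simp add: w Fexp[OF sx sy sz] V.scale_left_distrib sum.distrib)
  qed
  have coef: "(\<Sum>(x,y,z)\<leftarrow>xs. r x b * r y b' * r z b'') = (\<Sum>(x,y,z)\<leftarrow>ys. r x b * r y b' * r z b'')" for b b' b''
    using te linr[of b] linr[of b'] linr[of b''] unfolding tensor3_eq_def by blast
  show ?thesis
    by (simp add: gen coef)
qed



definition Dc :: "('h \<Rightarrow> ('h \<times> 'h) list) \<Rightarrow> ('h \<Rightarrow> 'h \<Rightarrow> 'v::comm_monoid_add) \<Rightarrow> 'h \<Rightarrow> 'v" where
  "Dc Cop F u = (\<Sum>(x,y)\<leftarrow>Cop u. F x y)"

lemma lin_comp: "lin sc scV g \<Longrightarrow> lin sc sc h \<Longrightarrow> lin sc scV (\<lambda>x. g (h x))"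
  by (simp add: lin_def)

lemma lin_sum_list_prod:
  assumes "vector_space scV" "\<And>r s. lin sc scV (\<lambda>p. G p r s)"
  shows "lin sc scV (\<lambda>p. \<Sum>(r,s)\<leftarrow>zs. G p r s)"
proof -
  interpret V: vector_space scV by fact
  show ?thesis
  proof (induction zs)
    case Nil then show ?case by (simp add: lin_def)
  next
    case (Cons z zs)
    obtain r s where z: "z = (r,s)" by force
    show ?case using Cons assms(2)[of r s]
      by (simp add: z lin_def V.scale_right_distrib)
  qed
qed

lemma lin_sum_list_prod_app:
  assumes "lin s1 s2 h"
  shows "h (\<Sum>(x,y)\<leftarrow>zs. F x y) = (\<Sum>(x,y)\<leftarrow>zs. h (F x y))"
  by (induction zs) (auto simp: lin_zero[OF assms] lin_add[OF assms])

lemma lin_Dc_app: "lin s1 s2 h \<Longrightarrow> h (Dc Cop F u) = Dc Cop (\<lambda>p q. h (F p q)) u"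
  unfolding Dc_def by (rule lin_sum_list_prod_app)

lemma lin_scaleV: "vector_space scV \<Longrightarrow> lin sc scV h \<Longrightarrow> lin sc scV (\<lambda>x. scV c (h x))"
proof -
  assume "vector_space scV" "lin sc scV h"
  then interpret V: vector_space scV by simp
  show ?thesis using \<open>lin sc scV h\<close> unfolding lin_def by (simp add: V.scale_right_distrib mult.commute)
qed

lemma lin_scaleV_left: "vector_space scV \<Longrightarrow> lin sc (*) \<phi> \<Longrightarrow> lin sc scV (\<lambda>x. scV (\<phi> x) v)"
proof -
  assume "vector_space scV" "lin sc (*) \<phi>"
  then interpret V: vector_space scV by simp
  show ?thesis using \<open>lin sc (*) \<phi>\<close> unfolding lin_def by (simp add: V.scale_left_distrib)
qed

lemma sum_list_concat_map: "sum_list (map g (concat xss)) = sum_list (map (\<lambda>xs. sum_list (map g xs)) xss)"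
  by (induction xss) simp_all

lemma sum_list_swap: fixes f :: "'a \<Rightarrow> 'b \<Rightarrow> 'v::comm_monoid_add" shows "(\<Sum>z\<leftarrow>xs. \<Sum>w\<leftarrow>ys. f z w) = (\<Sum>w\<leftarrow>ys. \<Sum>z\<leftarrow>xs. f z w)"
proof (induction xs)
  case (Cons a xs)
  have "(\<Sum>w\<leftarrow>ys. f a w + (\<Sum>z\<leftarrow>xs. f z w)) = (\<Sum>w\<leftarrow>ys. f a w) + (\<Sum>w\<leftarrow>ys. \<Sum>z\<leftarrow>xs. f z w)"
    by (rule sum_list_addf)
  then show ?case using Cons by simp
qed simp

lemma Dc_comm: "Dc Cop (\<lambda>a b. Dc Cop (\<lambda>c d. G a b c d) v) u = Dc Cop (\<lambda>c d. Dc Cop (\<lambda>a b. G a b c d) u) v"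
  unfolding Dc_def split_def by (rule sum_list_swap)



locale hopfV =
  fixes sc :: "'k::field \<Rightarrow> 'h::ring_1 \<Rightarrow> 'h" and Cop :: "'h \<Rightarrow> ('h \<times> 'h) list"
    and eps :: "'h \<Rightarrow> 'k" and S :: "'h \<Rightarrow> 'h" and scV :: "'k \<Rightarrow> 'v::ab_group_add \<Rightarrow> 'v"
  assumes H: "cocomm_hopf_algebra sc Cop eps S" and VV: "vector_space scV"
begin

lemma HV: "vector_space sc" using H by (simp add: cocomm_hopf_algebra_def)
lemma sc_mult1: "sc c (x * y) = sc c x * y" using H by (simp add: cocomm_hopf_algebra_def)
lemma sc_mult2: "sc c (x * y) = x * sc c y" using H unfolding cocomm_hopf_algebra_def by blast
lemma Cop_add: "tensor_eq sc (Cop (a + b)) (Cop a @ Cop b)" using H by (simp add: cocomm_hopf_algebra_def)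
lemma Cop_sc: "tensor_eq sc (Cop (sc c a)) (map (\<lambda>(x,y). (sc c x, y)) (Cop a))" using H by (simp add: cocomm_hopf_algebra_def)
lemma Cop_assoc: "tensor3_eq sc
            (concat (map (\<lambda>(x,y). map (\<lambda>(u,v). (u,v,y)) (Cop x)) (Cop a)))
            (concat (map (\<lambda>(x,y). map (\<lambda>(u,v). (x,u,v)) (Cop y)) (Cop a)))"
  using H by (simp add: cocomm_hopf_algebra_def)
lemma eps_lin: "lin sc (*) eps" using H by (simp add: cocomm_hopf_algebra_def linear_lin)
lemma counit1: "(\<Sum>(x,y)\<leftarrow>Cop a. sc (eps x) y) = a" using H by (simp add: cocomm_hopf_algebra_def)
lemma counit2: "(\<Sum>(x,y)\<leftarrow>Cop a. sc (eps y) x) = a" using H by (simp add: cocomm_hopf_algebra_def)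
lemma Cop_mult: "tensor_eq sc (Cop (a * b))
              (concat (map (\<lambda>(x,y). map (\<lambda>(u,v). (x * u, y * v)) (Cop b)) (Cop a)))"
  using H by (simp add: cocomm_hopf_algebra_def)
lemma Cop_one: "tensor_eq sc (Cop 1) [(1,1)]" using H by (simp add: cocomm_hopf_algebra_def)
lemma S_lin: "lin sc sc S" using H by (simp add: cocomm_hopf_algebra_def linear_lin)
lemma antipode1: "(\<Sum>(x,y)\<leftarrow>Cop a. S x * y) = sc (eps a) 1" using H by (simp add: cocomm_hopf_algebra_def)
lemma antipode2: "(\<Sum>(x,y)\<leftarrow>Cop a. x * S y) = sc (eps a) 1" using H by (simp add: cocomm_hopf_algebra_def)
lemma cocomm: "tensor_eq sc (Cop a) (map (\<lambda>(x,y). (y,x)) (Cop a))" using H by (simp add: cocomm_hopf_algebra_def)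

sublocale V: vector_space scV by (rule VV)

abbreviation D where "D \<equiv> Dc Cop"

lemma scV_sum_list: "scV c (\<Sum>(x,y)\<leftarrow>zs. G x y) = (\<Sum>(x,y)\<leftarrow>zs. scV c (G x y))"
  by (induction zs) (auto simp: V.scale_right_distrib)

lemma D_scale_out: "D (\<lambda>p q. scV c (G p q)) u = scV c (D G u)"
  unfolding Dc_def by (simp add: scV_sum_list)

lemma lin_mult_r: "lin sc sc (\<lambda>x. x * r)"
  by (simp add: lin_def distrib_right sc_mult1)
lemma lin_mult_l: "lin sc sc (\<lambda>x. r * x)"
  by (simp add: lin_def distrib_left sc_mult2)

lemma lin_D_param:
  assumes "\<And>r s. lin sc scV (\<lambda>p. G p r s)"
  shows "lin sc scV (\<lambda>p. D (G p) u)"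
  unfolding Dc_def by (rule lin_sum_list_prod[OF VV assms])

lemma transfer2V:
  assumes "tensor_eq sc xs ys" "\<And>y. lin sc scV (\<lambda>x. F x y)" "\<And>x. lin sc scV (F x)"
  shows "(\<Sum>(x,y)\<leftarrow>xs. F x y) = (\<Sum>(x,y)\<leftarrow>ys. F x y)"
  by (rule transfer2[OF HV VV assms])

context
  fixes F :: "'h \<Rightarrow> 'h \<Rightarrow> 'v"
  assumes F1: "\<And>y. lin sc scV (\<lambda>x. F x y)" and F2: "\<And>x. lin sc scV (F x)"
begin

lemma D_add: "D F (a + b) = D F a + D F b"
  using transfer2V[OF Cop_add F1 F2] by (simp add: Dc_def)

lemma D_scale: "D F (sc c a) = scV c (D F a)"
proof -
  have "D F (sc c a) = (\<Sum>(x,y)\<leftarrow>map (\<lambda>(x,y). (sc c x, y)) (Cop a). F x y)"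
    using transfer2V[OF Cop_sc F1 F2] by (simp add: Dc_def)
  also have "\<dots> = (\<Sum>(x,y)\<leftarrow>Cop a. scV c (F x y))"
    by (simp add: lin_scale[OF F1] o_def split_def)
  also have "\<dots> = scV c (D F a)"
    using D_scale_out[of c F a] by (simp add: Dc_def)
  finally show ?thesis .
qed

lemma lin_D: "lin sc scV (D F)"
  by (simp add: lin_def D_add D_scale)

lemma D_mult: "D F (a * b) = D (\<lambda>p q. D (\<lambda>r s. F (p * r) (q * s)) b) a"
proof -
  have F1': "lin sc scV (\<lambda>x. F (x * r) z)" for r z
    by (rule lin_comp[OF F1 lin_mult_r])
  have "D F (a * b) = (\<Sum>(x,y)\<leftarrow>concat (map (\<lambda>(x,y). map (\<lambda>(u,v). (x * u, y * v)) (Cop b)) (Cop a)). F x y)"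
    using transfer2V[OF Cop_mult F1 F2] by (simp add: Dc_def)
  also have "\<dots> = D (\<lambda>p q. D (\<lambda>r s. F (p * r) (q * s)) b) a"
    by (simp add: Dc_def sum_list_concat_map o_def split_def)
  finally show ?thesis .
qed

lemma D_swap: "D F a = D (\<lambda>p q. F q p) a"
  using transfer2V[OF cocomm F1 F2] by (simp add: Dc_def o_def split_def)

lemma D_one: "D F 1 = F 1 1"
  using transfer2V[OF Cop_one F1 F2] by (simp add: Dc_def)

lemma D_hom:
  assumes B: "coalg_hom sc Cop eps B"
  shows "D F (B a) = D (\<lambda>p q. F (B p) (B q)) a"
proof -
  have te: "tensor_eq sc (Cop (B a)) (map (\<lambda>(x,y). (B x, B y)) (Cop a))"
    using B by (simp add: coalg_hom_def)
  show ?thesis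
    using transfer2V[OF te F1 F2] by (simp add: Dc_def o_def split_def)
qed

end

lemma D_assoc:
  fixes T :: "'h \<Rightarrow> 'h \<Rightarrow> 'h \<Rightarrow> 'v"
  assumes T1: "\<And>y z. lin sc scV (\<lambda>x. T x y z)" and T2: "\<And>x z. lin sc scV (\<lambda>y. T x y z)"
    and T3: "\<And>x y. lin sc scV (T x y)"
  shows "D (\<lambda>x y. D (\<lambda>u v. T u v y) x) a = D (\<lambda>x y. D (\<lambda>u v. T x u v) y) a"
  using transfer3[OF HV VV Cop_assoc T1 T2 T3]
  by (simp add: Dc_def sum_list_concat_map o_def split_def)

lemma counit1D: "lin sc scV h \<Longrightarrow> D (\<lambda>p q. scV (eps p) (h q)) a = h a"
proof -
  assume h: "lin sc scV h"
  have "h a = h (\<Sum>(x,y)\<leftarrow>Cop a. sc (eps x) y)" by (simp add: counit1)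
  also have "\<dots> = D (\<lambda>p q. scV (eps p) (h q)) a"
    by (simp add: lin_sum_list_prod_app[OF h] lin_scale[OF h] Dc_def)
  finally show ?thesis by simp
qed

lemma counit2D: "lin sc scV h \<Longrightarrow> D (\<lambda>p q. scV (eps q) (h p)) a = h a"
proof -
  assume h: "lin sc scV h"
  have "h a = h (\<Sum>(x,y)\<leftarrow>Cop a. sc (eps y) x)" by (simp add: counit2)
  also have "\<dots> = D (\<lambda>p q. scV (eps q) (h p)) a"
    by (simp add: lin_sum_list_prod_app[OF h] lin_scale[OF h] Dc_def)
  finally show ?thesis by simp
qed

lemma antipode1D: "lin sc scV h \<Longrightarrow> D (\<lambda>p q. h (S p * q)) a = scV (eps a) (h 1)"
proof -
  assume h: "lin sc scV h"
  have "scV (eps a) (h 1) = h (\<Sum>(x,y)\<leftarrow>Cop a. S x * y)" by (simp add: antipode1 lin_scale[OF h])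
  also have "\<dots> = D (\<lambda>p q. h (S p * q)) a"
    by (simp add: lin_sum_list_prod_app[OF h] Dc_def)
  finally show ?thesis by simp
qed

lemma antipode2D: "lin sc scV h \<Longrightarrow> D (\<lambda>p q. h (p * S q)) a = scV (eps a) (h 1)"
proof -
  assume h: "lin sc scV h"
  have "scV (eps a) (h 1) = h (\<Sum>(x,y)\<leftarrow>Cop a. x * S y)" by (simp add: antipode2 lin_scale[OF h])
  also have "\<dots> = D (\<lambda>p q. h (p * S q)) a"
    by (simp add: lin_sum_list_prod_app[OF h] Dc_def)
  finally show ?thesis by simp
qed

end



context hopfV begin

lemma mid_swap:
  fixes K :: "'h \<Rightarrow> 'h \<Rightarrow> 'h \<Rightarrow> 'h \<Rightarrow> 'v"
  assumes K1: "\<And>b c d. lin sc scV (\<lambda>a. K a b c d)" and K2: "\<And>a c d. lin sc scV (\<lambda>b. K a b c d)"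
    and K3: "\<And>a b d. lin sc scV (\<lambda>c. K a b c d)" and K4: "\<And>a b c. lin sc scV (\<lambda>d. K a b c d)"
  shows "D (\<lambda>u v. D (\<lambda>a b. D (\<lambda>c d. K a b c d) v) u) y = D (\<lambda>u v. D (\<lambda>a b. D (\<lambda>c d. K a c b d) v) u) y"
proof -
  have s1: "D (\<lambda>u v. D (\<lambda>a b. D (\<lambda>c d. K a b c d) v) u) y = D (\<lambda>a z. D (\<lambda>b v. D (\<lambda>c d. K a b c d) v) z) y"
    by (rule D_assoc[where T="\<lambda>a b v. D (\<lambda>c d. K a b c d) v"])
      (auto intro!: lin_D lin_D_param K1 K2 K3 K4)
  have s2: "D (\<lambda>b v. D (\<lambda>c d. K a b c d) v) z = D (\<lambda>b v. D (\<lambda>c d. K a c b d) v) z" for a z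
  proof -
    have "D (\<lambda>b v. D (\<lambda>c d. K a b c d) v) z = D (\<lambda>t d. D (\<lambda>b c. K a b c d) t) z"
      by (rule D_assoc[where T="\<lambda>b c d. K a b c d", symmetric]) (auto intro!: K1 K2 K3 K4)
    also have "\<dots> = D (\<lambda>t d. D (\<lambda>b c. K a c b d) t) z"
      by (subst D_swap[where F="\<lambda>b c. K a b c d" for d]) (auto intro!: K2 K3)
    also have "\<dots> = D (\<lambda>b v. D (\<lambda>c d. K a c b d) v) z"
      by (rule D_assoc[where T="\<lambda>b c d. K a c b d"]) (auto intro!: K2 K3 K4)
    finally show ?thesis .
  qed
  have s3: "D (\<lambda>a z. D (\<lambda>b v. D (\<lambda>c d. K a c b d) v) z) y = D (\<lambda>u v. D (\<lambda>a b. D (\<lambda>c d. K a c b d) v) u) y"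
    by (rule D_assoc[where T="\<lambda>a b v. D (\<lambda>c d. K a c b d) v", symmetric])
      (auto intro!: lin_D lin_D_param K1 K2 K3 K4)
  show ?thesis using s1 s2 s3 by simp
qed

end



context hopfV begin

lemma lin_id: "lin sc sc (\<lambda>x. x)" by (simp add: lin_def)
lemma lin_mr': "lin sc sc h \<Longrightarrow> lin sc sc (\<lambda>x. h x * r)"
  by (rule lin_comp[OF lin_mult_r])
lemma lin_ml': "lin sc sc h \<Longrightarrow> lin sc sc (\<lambda>x. r * h x)"
  by (rule lin_comp[OF lin_mult_l])
lemma lin_S': "lin sc sc h \<Longrightarrow> lin sc sc (\<lambda>x. S (h x))"
  by (rule lin_comp[OF S_lin])

lemmas lin_intros = lin_id lin_mr' lin_ml' lin_S'

context
  fixes F :: "'h \<Rightarrow> 'h \<Rightarrow> 'v"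
  assumes F1: "\<And>y. lin sc scV (\<lambda>x. F x y)" and F2: "\<And>x. lin sc scV (F x)"
begin

lemma linF1': "lin sc sc h \<Longrightarrow> lin sc scV (\<lambda>x. F (h x) z)"
  by (rule lin_comp[OF F1])
lemma linF2': "lin sc sc h \<Longrightarrow> lin sc scV (\<lambda>x. F z (h x))"
  by (rule lin_comp[OF F2])

lemma D_S: "D F (S w) = D (\<lambda>p q. F (S p) (S q)) w"
proof -
  define K where "K w1 w2 w3 = D (\<lambda>a b. D (\<lambda>c d. D (\<lambda>e g. F (S a * c * e) (S b * d * g)) (S w3)) w2) w1"
    for w1 w2 w3
  have K1: "lin sc scV (\<lambda>w1. K w1 w2 w3)" for w2 w3
    unfolding K_def by (auto intro!: lin_D lin_D_param linF1' linF2' lin_intros)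
  have K2: "lin sc scV (\<lambda>w2. K w1 w2 w3)" for w1 w3
    unfolding K_def by (auto intro!: lin_D lin_D_param linF1' linF2' lin_intros)
  have K3: "lin sc scV (\<lambda>w3. K w1 w2 w3)" for w1 w2
    unfolding K_def 
    by (auto intro!: lin_D_param lin_comp[OF lin_D S_lin] linF1' linF2' lin_intros)
  have assoc: "D (\<lambda>y w3. D (\<lambda>w1 w2. K w1 w2 w3) y) w = D (\<lambda>w1 x. D (\<lambda>w2 w3. K w1 w2 w3) x) w"
    by (rule D_assoc[OF K1 K2 K3])
  define R0 where "R0 = D (\<lambda>a b. F (S a) (S b))"
  have linR0: "lin sc scV R0" unfolding R0_def by (auto intro!: lin_D linF1' linF2' lin_intros)
  have g1: "D (\<lambda>w2 w3. K w1 w2 w3) x = scV (eps x) (R0 w1)" for w1 x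
  proof -
    have Phi: "D (\<lambda>c d. D (\<lambda>e g. F (S a * c * e) (S b * d * g)) (S w3)) w2
             = D (\<lambda>c d. F (S a * c) (S b * d)) (w2 * S w3)" for a b w2 w3
      by (subst D_mult[where F="\<lambda>c d. F (S a * c) (S b * d)"])
        (auto intro!: linF1' linF2' lin_intros simp: mult.assoc)
    have one: "D (\<lambda>c d. F (S a * c) (S b * d)) 1 = F (S a) (S b)" for a b
      by (subst D_one) (auto intro!: linF1' linF2' lin_intros)
    have "D (\<lambda>w2 w3. K w1 w2 w3) x = D (\<lambda>a b. D (\<lambda>w2 w3. D (\<lambda>c d. F (S a * c) (S b * d)) (w2 * S w3)) x) w1"
      unfolding K_def Phi by (rule Dc_comm)
    also have "\<dots> = D (\<lambda>a b. scV (eps x) (F (S a) (S b))) w1"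
      by (subst antipode2D[where h="D (\<lambda>c d. F (S a * c) (S b * d))" for a b])
        (auto intro!: lin_D linF1' linF2' lin_intros simp: one)
    also have "\<dots> = scV (eps x) (R0 w1)"
      unfolding R0_def by (rule D_scale_out)
    finally show ?thesis .
  qed
  have N1: "D (\<lambda>w1 x. D (\<lambda>w2 w3. K w1 w2 w3) x) w = R0 w"
    unfolding g1 by (rule counit2D[OF linR0])
  have g2: "D (\<lambda>w1 w2. K w1 w2 w3) y = scV (eps y) (D F (S w3))" for y w3
  proof -
    define M where "M p q = D (\<lambda>e g. F (p * e) (q * g)) (S w3)" for p q
    have M1: "lin sc scV (\<lambda>p. M p q)" for q
      unfolding M_def by (auto intro!: lin_D_param linF1' linF2' lin_intros)
    have M2: "lin sc scV (\<lambda>q. M p q)" for p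
      unfolding M_def by (auto intro!: lin_D_param linF1' linF2' lin_intros)
    have M1': "lin sc sc h \<Longrightarrow> lin sc scV (\<lambda>x. M (h x) z)" for h z
      by (rule lin_comp[OF M1])
    have M2': "lin sc sc h \<Longrightarrow> lin sc scV (\<lambda>x. M z (h x))" for h z
      by (rule lin_comp[OF M2])
    have "D (\<lambda>w1 w2. K w1 w2 w3) y = D (\<lambda>u v. D (\<lambda>a b. D (\<lambda>c d. M (S a * c) (S b * d)) v) u) y"
      unfolding K_def M_def by simp
    also have "\<dots> = D (\<lambda>u v. D (\<lambda>a b. D (\<lambda>c d. M (S a * b) (S c * d)) v) u) y"
      by (rule mid_swap) (auto intro!: M1' M2' lin_intros)
    also have "\<dots> = D (\<lambda>u v. scV (eps u) (D (\<lambda>c d. M 1 (S c * d)) v)) y"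
      by (subst antipode1D[where h="\<lambda>p. D (\<lambda>c d. M p (S c * d)) v" for v])
        (auto intro!: lin_D_param M1' M2' lin_intros)
    also have "\<dots> = D (\<lambda>u v. scV (eps u) (scV (eps v) (M 1 1))) y"
      by (subst antipode1D[where h="\<lambda>q. M 1 q"]) (auto intro!: M2)
    also have "\<dots> = scV (eps y) (M 1 1)"
      by (rule counit1D) (auto intro!: lin_scaleV_left[OF VV] eps_lin)
    also have "M 1 1 = D F (S w3)" unfolding M_def by simp
    finally show ?thesis .
  qed
  have N2: "D (\<lambda>y w3. D (\<lambda>w1 w2. K w1 w2 w3) y) w = D F (S w)"
    unfolding g2 by (rule counit1D[OF lin_comp[OF lin_D S_lin]]) (auto intro!: F1 F2)
  show ?thesis using assoc N1 N2 R0_def by simp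
qed

end

end



lemma coalg_hom_lin: "coalg_hom sc Cop eps B \<Longrightarrow> lin sc sc B"
  by (simp add: coalg_hom_def linear_lin)

lemma cocycle_Dc: "cocycle Cop S B1 B2 u = Dc Cop (\<lambda>x y. B1 x * S (B2 y)) u"
  by (simp add: cocycle_def Dc_def)

context hopfV begin

context
  fixes F :: "'h \<Rightarrow> 'h \<Rightarrow> 'v" and B1 B2 :: "'h \<Rightarrow> 'h"
  assumes F1: "\<And>y. lin sc scV (\<lambda>x. F x y)" and F2: "\<And>x. lin sc scV (F x)"
    and HB1: "coalg_hom sc Cop eps B1" and HB2: "coalg_hom sc Cop eps B2"
begin

lemma linF1'': "lin sc sc h \<Longrightarrow> lin sc scV (\<lambda>x. F (h x) z)"
  by (rule lin_comp[OF F1])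
lemma linF2'': "lin sc sc h \<Longrightarrow> lin sc scV (\<lambda>x. F z (h x))"
  by (rule lin_comp[OF F2])
lemma lin_B1': "lin sc sc h \<Longrightarrow> lin sc sc (\<lambda>x. B1 (h x))"
  by (rule lin_comp[OF coalg_hom_lin[OF HB1]])
lemma lin_B2': "lin sc sc h \<Longrightarrow> lin sc sc (\<lambda>x. B2 (h x))"
  by (rule lin_comp[OF coalg_hom_lin[OF HB2]])

lemma D_sigma: "D F (cocycle Cop S B1 B2 c)
   = D (\<lambda>x y. F (cocycle Cop S B1 B2 x) (cocycle Cop S B1 B2 y)) c"
proof -
  have step: "D F (B1 x * S (B2 y))
     = D (\<lambda>x1 x2. D (\<lambda>y1 y2. F (B1 x1 * S (B2 y1)) (B1 x2 * S (B2 y2))) y) x" for x y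
  proof -
    have "D F (B1 x * S (B2 y)) = D (\<lambda>p q. D (\<lambda>r s. F (p * r) (q * s)) (S (B2 y))) (B1 x)"
      by (rule D_mult[OF F1 F2])
    also have "\<dots> = D (\<lambda>p q. D (\<lambda>r s. F (B1 p * r) (B1 q * s)) (S (B2 y))) x"
      by (rule D_hom[OF _ _ HB1]) (auto intro!: lin_D_param linF1'' linF2'' lin_intros)
    also have "\<dots> = D (\<lambda>p q. D (\<lambda>r s. F (B1 p * S r) (B1 q * S s)) (B2 y)) x"
      by (subst D_S) (auto intro!: linF1'' linF2'' lin_intros)
    also have "\<dots> = D (\<lambda>p q. D (\<lambda>r s. F (B1 p * S (B2 r)) (B1 q * S (B2 s))) y) x"
      by (subst D_hom[OF _ _ HB2]) (auto intro!: linF1'' linF2'' lin_intros)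
    finally show ?thesis .
  qed
  have "D F (cocycle Cop S B1 B2 c) = D (\<lambda>x y. D F (B1 x * S (B2 y))) c"
    unfolding cocycle_Dc by (rule lin_Dc_app[OF lin_D[OF F1 F2]])
  also have "\<dots> = D (\<lambda>x y. D (\<lambda>x1 x2. D (\<lambda>y1 y2. F (B1 x1 * S (B2 y1)) (B1 x2 * S (B2 y2))) y) x) c"
    unfolding step ..
  also have "\<dots> = D (\<lambda>x y. D (\<lambda>x1 x2. D (\<lambda>y1 y2. F (B1 x1 * S (B2 x2)) (B1 y1 * S (B2 y2))) y) x) c"
    by (rule mid_swap[where K="\<lambda>a b c d. F (B1 a * S (B2 c)) (B1 b * S (B2 d))"])
      (auto intro!: linF1'' linF2'' lin_intros lin_B1' lin_B2')
  also have "\<dots> = D (\<lambda>x y. F (cocycle Cop S B1 B2 x) (cocycle Cop S B1 B2 y)) c"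
  proof -
    have "F (cocycle Cop S B1 B2 x) (cocycle Cop S B1 B2 y)
      = D (\<lambda>x1 x2. D (\<lambda>y1 y2. F (B1 x1 * S (B2 x2)) (B1 y1 * S (B2 y2))) y) x" for x y
      unfolding cocycle_Dc
      by (subst lin_Dc_app[OF F1]) (simp add: lin_Dc_app[OF F2])
    then show ?thesis by simp
  qed
  finally show ?thesis .
qed

end

end



lemma lin_mult_const_r:
  fixes scA :: "'k::field \<Rightarrow> 'a::comm_ring_1 \<Rightarrow> 'a"
  assumes A: "\<And>c x y. scA c (x * y) = scA c x * y" and g: "lin sc scA g"
  shows "lin sc scA (\<lambda>x. g x * a)"
  using g unfolding lin_def by (simp add: A distrib_right)

lemma lin_mult_const_l:
  fixes scA :: "'k::field \<Rightarrow> 'a::comm_ring_1 \<Rightarrow> 'a"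
  assumes A: "\<And>c x y. scA c (x * y) = scA c x * y" and g: "lin sc scA g"
  shows "lin sc scA (\<lambda>x. a * g x)"
  using g unfolding lin_def by (simp add: A distrib_left mult.commute[of a])

theorem mainTheorem14:
  fixes sc :: "'k::field_char_0 \<Rightarrow> 'h::ring_1 \<Rightarrow> 'h"
    and Cop :: "'h \<Rightarrow> ('h \<times> 'h) list"
    and eps :: "'h \<Rightarrow> 'k"
    and S B1 B2 :: "'h \<Rightarrow> 'h"
    and scA :: "'k \<Rightarrow> 'a::comm_ring_1 \<Rightarrow> 'a"
  assumes "rota_baxter_system sc Cop eps S B1 B2"
    and "desc_hopf_structure sc Cop S B1 B2"
    and "unital_comm_algebra scA"
  shows "(\<forall>f\<in>Char sc scA. Psi (desc_space Cop S B1 B2) f \<in> Char_desc sc Cop S B1 B2 scA)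
       \<and> (\<forall>f\<in>Char sc scA. \<forall>g\<in>Char sc scA.
            Psi (desc_space Cop S B1 B2) (conv Cop f g)
            = conv_desc sc Cop (desc_space Cop S B1 B2)
                (Psi (desc_space Cop S B1 B2) f) (Psi (desc_space Cop S B1 B2) g))"
proof -
  note RB = assms(1)[unfolded rota_baxter_system_def]
  have H: "cocomm_hopf_algebra sc Cop eps S" using RB by blast
  have HB1: "coalg_hom sc Cop eps B1" and HB2: "coalg_hom sc Cop eps B2" using RB by blast+
  have B11: "B1 1 = 1" and B21: "B2 1 = 1" using RB by blast+
  have RB1: "B1 a * B1 b = B1 (desc_op Cop S B1 B2 a b)" for a b using RB by blast
  have RB2: "B2 a * B2 b = B2 (desc_op Cop S B1 B2 a b)" for a b using RB by blast
  have VA: "vector_space scA" and Am: "\<And>c x y. scA c (x * y) = scA c x * y"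
    using assms(3) unfolding unital_comm_algebra_def by blast+
  interpret HA: hopfV sc Cop eps S scA by (rule hopfV.intro[OF H VA])
  interpret HH: hopfV sc Cop eps S sc by (rule hopfV.intro[OF H HA.HV])
  define \<sigma> where "\<sigma> = cocycle Cop S B1 B2"
  define H1 where "H1 = desc_space Cop S B1 B2"
  have H1_def': "H1 = range \<sigma>" unfolding H1_def \<sigma>_def desc_space_def ..
  have linB1: "lin sc sc B1" and linB2: "lin sc sc B2"
    using HB1 HB2 by (simp_all add: coalg_hom_lin)
  have G1: "lin sc sc (\<lambda>x. B1 x * S (B2 y))" for y
    by (rule HH.lin_mr'[OF linB1])
  have G2: "lin sc sc (\<lambda>y. B1 x * S (B2 y))" for x
    by (rule HH.lin_ml'[OF HH.lin_S'[OF linB2]])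
  have \<sigma>_add: "\<sigma> (a + b) = \<sigma> a + \<sigma> b" for a b
    unfolding \<sigma>_def cocycle_Dc by (rule HH.D_add[OF G1 G2])
  have \<sigma>_sc: "\<sigma> (sc c a) = sc c (\<sigma> a)" for c a
    unfolding \<sigma>_def cocycle_Dc by (rule HH.D_scale[OF G1 G2])
  have desc1: "desc_op Cop S B1 B2 a 1 = \<sigma> a" for a
    by (simp add: desc_op_def \<sigma>_def cocycle_def)
  have B1\<sigma>: "B1 (\<sigma> a) = B1 a" for a using RB1[of a 1] by (simp add: desc1 B11)
  have B2\<sigma>: "B2 (\<sigma> a) = B2 a" for a using RB2[of a 1] by (simp add: desc1 B21)
  have DS: "1 \<in> H1" "\<And>a b. a \<in> H1 \<Longrightarrow> b \<in> H1 \<Longrightarrow> desc_op Cop S B1 B2 a b \<in> H1"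
    "\<And>a. a \<in> H1 \<Longrightarrow> \<exists>xs. tensor_eq sc (Cop a) xs \<and> set xs \<subseteq> H1 \<times> H1"
    using assms(2) unfolding desc_hopf_structure_def H1_def Let_def by blast+
  have part1: "Psi H1 f \<in> Char_desc sc Cop S B1 B2 scA" if f: "f \<in> Char sc scA" for f
  proof -
    have flin: "lin sc scA f" and f1: "f 1 = 1" and fm: "\<And>a b. f (a * b) = f a * f b"
      using f unfolding Char_def by (auto simp: linear_lin)
    have L1: "lin sc scA (\<lambda>x. f (B1 x) * f (S (B2 y)))" for y
      by (rule lin_mult_const_r[OF Am lin_comp[OF flin linB1]])
    have L2: "lin sc scA (\<lambda>y. f (B1 x) * f (S (B2 y)))" for x
      by (rule lin_mult_const_l[OF Am lin_comp[OF flin HH.lin_S'[OF linB2]]])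
    have f\<sigma>: "f (\<sigma> u) = HA.D (\<lambda>x y. f (B1 x) * f (S (B2 y))) u" for u
      unfolding \<sigma>_def cocycle_Dc by (simp add: lin_Dc_app[OF flin] fm)
    have f\<sigma>\<sigma>: "f (\<sigma> (\<sigma> c)) = f (\<sigma> c)" for c
    proof -
      have "f (\<sigma> (\<sigma> c)) = HA.D (\<lambda>x y. f (B1 x) * f (S (B2 y))) (\<sigma> c)" by (rule f\<sigma>)
      also have "\<dots> = HA.D (\<lambda>x y. f (B1 (\<sigma> x)) * f (S (B2 (\<sigma> y)))) c"
        unfolding \<sigma>_def by (rule HA.D_sigma[OF L1 L2 HB1 HB2])
      also have "\<dots> = f (\<sigma> c)" by (simp add: B1\<sigma> B2\<sigma> f\<sigma>)
      finally show ?thesis .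
    qed
    have fdesc: "f (desc_op Cop S B1 B2 a b) = f a * f b" if a: "a \<in> H1" for a b
    proof -
      obtain c where c: "a = \<sigma> c" using a H1_def' by blast
      have "f (desc_op Cop S B1 B2 a b) = (\<Sum>(x,y)\<leftarrow>Cop a. f b * (f (B1 x) * f (S (B2 y))))"
        unfolding desc_op_def by (simp add: lin_sum_list_prod_app[OF flin] fm mult_ac)
      also have "\<dots> = f b * f (\<sigma> a)"
        by (simp add: f\<sigma> Dc_def sum_list_const_mult split_def)
      also have "\<dots> = f a * f b" using f\<sigma>\<sigma>[of c] c by (simp add: mult.commute)
      finally show ?thesis .
    qed
    have clos_add: "a + b \<in> H1" if "a \<in> H1" "b \<in> H1" for a b
      using that unfolding H1_def' by (auto simp: \<sigma>_add[symmetric])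
    have clos_sc: "sc c a \<in> H1" if "a \<in> H1" for c a
      using that unfolding H1_def' by (auto simp: \<sigma>_sc[symmetric])
    show ?thesis
      unfolding Char_desc_def Let_def H1_def[symmetric] Psi_def
      using DS clos_add clos_sc fdesc f1 lin_add[OF flin] lin_scale[OF flin]
      by auto
  qed
  have part2: "Psi H1 (conv Cop f g) = conv_desc sc Cop H1 (Psi H1 f) (Psi H1 g)"
    if f: "f \<in> Char sc scA" and g: "g \<in> Char sc scA" for f g
  proof
    fix a
    have flin: "lin sc scA f" and glin: "lin sc scA g"
      using f g unfolding Char_def by (auto simp: linear_lin)
    show "Psi H1 (conv Cop f g) a = conv_desc sc Cop H1 (Psi H1 f) (Psi H1 g) a"
    proof (cases "a \<in> H1")
      case False
      then show ?thesis by (simp add: Psi_def conv_desc_def)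
    next
      case True
      define xs where "xs = desc_cop sc Cop H1 a"
      have xs: "tensor_eq sc (Cop a) xs \<and> set xs \<subseteq> H1 \<times> H1"
        unfolding xs_def desc_cop_def by (rule someI_ex[OF DS(3)[OF True]])
      have "conv_desc sc Cop H1 (Psi H1 f) (Psi H1 g) a = (\<Sum>(x,y)\<leftarrow>xs. f x * g y)"
      proof -
        have "(\<Sum>(x,y)\<leftarrow>xs. Psi H1 f x * Psi H1 g y) = (\<Sum>(x,y)\<leftarrow>xs. f x * g y)"
          by (rule arg_cong[where f=sum_list], rule map_cong) (use xs in \<open>auto simp: Psi_def\<close>)
        then show ?thesis using True by (simp add: conv_desc_def xs_def)
      qed
      also have "\<dots> = (\<Sum>(x,y)\<leftarrow>Cop a. f x * g y)"
        by (rule HA.transfer2V[OF xs[THEN conjunct1], symmetric])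
          (auto intro!: lin_mult_const_r[OF Am flin] lin_mult_const_l[OF Am glin])
      finally show ?thesis using True by (simp add: Psi_def conv_def)
    qed
  qed
  show ?thesis
    using part1 part2 unfolding H1_def by blast
qed

end
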